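(* Let $f\in\mathcal{R}$ be nonzero and suppose that for every integer $p\ge2$ there is $\lambda_p\neq0$ with $U_pf=\lambda_pf$. Then all poles of $f$ equal $1$ (i.e. the level of $f$ is $L=1$), and \[f(x)=C\,\Big(x\frac{d}{dx}\Big)^k\Big(\frac{1}{1-x}\Big)\] for some $k\in\mathbb{N}=\{0,1,2,\dots\}$ and $C\in\mathbb{C}$. Consequently $\lambda_p=p^k$ for every $p$.
   Context: $\mathcal{R}$ denotes the real vector space of rational functions $f(x)=A(x)/B(x)$ with $A,B\in\mathbb{R}[x]$, $B(0)\neq 0$ and $\deg A<\deg B$. For $f\in\mathcal{R}$ with Taylor expansion $f(x)=\sum_{n\ge0}a_nx^n$ at $0$ and a positive integer $p$, the Hecke operator $U_p$ is defined by $U_pf(x)=\sum_{n\ge 0}a_{pn}x^n$. If all poles of $f$ are roots of unity, the level of $f$ is the least common multiple of the orders of these roots of unity. *)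

theory Defs
  imports "HOL-Computational_Algebra.Computational_Algebra" "HOL-Computational_Algebra.Polynomial_FPS"
begin

text \<open>A rational function f = A/B with B(0) \<noteq> 0 and deg A < deg B (an element of the space R).\<close>
definition in_R :: "real poly \<Rightarrow> real poly \<Rightarrow> bool" where
  "in_R A B \<longleftrightarrow> poly B 0 \<noteq> 0 \<and> degree A < degree B"

text \<open>Taylor expansion at 0 of A/B (as a formal power series; valid since B(0) \<noteq> 0).\<close>
definition taylor_rf :: "real poly \<Rightarrow> real poly \<Rightarrow> real fps" where
  "taylor_rf A B = fps_of_poly A / fps_of_poly B"

definition hecke_U :: "nat \<Rightarrow> 'a fps \<Rightarrow> 'a fps" where
  "hecke_U p F = Abs_fps (\<lambda>n. F $ (p * n))"

definition poles_rf :: "real poly \<Rightarrow> real poly \<Rightarrow> complex set" where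
  "poles_rf A B = {z. order z (map_poly complex_of_real A) < order z (map_poly complex_of_real B)}"

definition fps_complexify :: "real fps \<Rightarrow> complex fps" where
  "fps_complexify F = Abs_fps (\<lambda>n. complex_of_real (F $ n))"

end

theory Submission
  imports Defs
begin


lemma coeff_shift_top:
  fixes R :: "complex poly"
  shows "coeff (pcompose R [:1,1:]) (degree R) = lead_coeff R"
  using lead_coeff_comp[of "[:1,1::complex:]" R] degree_pcompose[of R "[:1,1::complex:]"] by simp

lemma deg_shift_le:
  fixes R :: "complex poly"
  shows "degree (smult b (pcompose R [:1,1:]) - smult b0 R) \<le> degree R"
proof -
  have "degree (pcompose R [:1,1:]) = degree R" using degree_pcompose[of R "[:1,1::complex:]"] by simp
  then show ?thesis
    by (metis degree_diff_le degree_smult_le le_trans)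
qed

lemma shift_ne:
  fixes R :: "complex poly"
  assumes "R \<noteq> 0" "b \<noteq> b0"
  shows "smult b (pcompose R [:1,1:]) - smult b0 R \<noteq> 0 \<and>
         degree (smult b (pcompose R [:1,1:]) - smult b0 R) = degree R"
proof -
  define D where "D = smult b (pcompose R [:1,1:]) - smult b0 R"
  have c: "coeff D (degree R) = (b - b0) * lead_coeff R"
    unfolding D_def using coeff_shift_top[of R] by (simp add: algebra_simps)
  have "coeff D (degree R) \<noteq> 0" using c assms by simp
  then have "D \<noteq> 0" "degree R \<le> degree D" using le_degree by auto
  moreover have "degree D \<le> degree R" unfolding D_def by (rule deg_shift_le)
  ultimately show ?thesis unfolding D_def by auto
qed

lemma shift_lt:
  fixes R :: "complex poly"
  assumes "smult b (pcompose R [:1,1:]) - smult b R \<noteq> 0"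
  shows "degree (smult b (pcompose R [:1,1:]) - smult b R) < degree R"
proof -
  define D where "D = smult b (pcompose R [:1,1:]) - smult b R"
  have c: "coeff D (degree R) = 0"
    unfolding D_def using coeff_shift_top[of R] by (simp add: algebra_simps)
  have le: "degree D \<le> degree R" unfolding D_def by (rule deg_shift_le)
  have "degree D \<noteq> degree R"
  proof
    assume "degree D = degree R"
    then have "lead_coeff D = 0" using c by simp
    then have "D = 0" by simp
    then show False using assms D_def by simp
  qed
  then show ?thesis using le D_def by simp
qed

lemma poly_const_on_nat:
  fixes R :: "complex poly"
  assumes "\<And>n::nat. poly R (of_nat n) = c"
  shows "R = [:c:]"
proof (rule ccontr)
  assume "R \<noteq> [:c:]"
  then have "R - [:c:] \<noteq> 0" by simp
  then have "finite {x. poly (R - [:c:]) x = 0}" by (rule poly_roots_finite)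
  moreover have "range (of_nat :: nat \<Rightarrow> complex) \<subseteq> {x. poly (R - [:c:]) x = 0}"
    using assms by auto
  moreover have "infinite (range (of_nat :: nat \<Rightarrow> complex))"
    using infinite_UNIV_char_0 range_inj_infinite inj_of_nat by blast
  ultimately show False using finite_subset by blast
qed

lemma ep_unique:
  fixes R :: "complex \<Rightarrow> complex poly"
  assumes "finite T" "0 \<notin> T" "\<forall>n\<ge>n0. (\<Sum>\<beta>\<in>T. poly (R \<beta>) (of_nat n) * \<beta>^n) = 0"
  shows "\<forall>\<beta>\<in>T. R \<beta> = 0"
  using assms
proof (induction "\<Sum>\<beta>\<in>T. if R \<beta> = 0 then 0 else Suc (degree (R \<beta>))" arbitrary: R rule: less_induct)
  case less
  show ?case
  proof (rule ccontr)
    assume "\<not> (\<forall>\<beta>\<in>T. R \<beta> = 0)"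
    then obtain b0 where b0: "b0 \<in> T" "R b0 \<noteq> 0" by auto
    have b0nz: "b0 \<noteq> 0" using b0 less.prems(2) by auto
    define R' where "R' \<beta> = smult \<beta> (pcompose (R \<beta>) [:1,1:]) - smult b0 (R \<beta>)" for \<beta>
    have eq': "\<forall>n\<ge>n0. (\<Sum>\<beta>\<in>T. poly (R' \<beta>) (of_nat n) * \<beta>^n) = 0"
    proof (intro allI impI)
      fix n :: nat assume n: "n \<ge> n0"
      have "(\<Sum>\<beta>\<in>T. poly (R' \<beta>) (of_nat n) * \<beta>^n) =
          (\<Sum>\<beta>\<in>T. poly (R \<beta>) (of_nat (Suc n)) * \<beta>^(Suc n)) - b0 * (\<Sum>\<beta>\<in>T. poly (R \<beta>) (of_nat n) * \<beta>^n)"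
        by (simp add: R'_def poly_pcompose sum_subtractf sum_distrib_left algebra_simps)
      also have "\<dots> = 0" using less.prems(3)[rule_format, of "Suc n"] less.prems(3)[rule_format, of n] n by simp
      finally show "(\<Sum>\<beta>\<in>T. poly (R' \<beta>) (of_nat n) * \<beta>^n) = 0" .
    qed
    have lt: "(\<Sum>\<beta>\<in>T. if R' \<beta> = 0 then 0 else Suc (degree (R' \<beta>)))
            < (\<Sum>\<beta>\<in>T. if R \<beta> = 0 then 0 else Suc (degree (R \<beta>)))"
    proof (rule sum_strict_mono_ex1[OF less.prems(1)])
      show "\<forall>x\<in>T. (if R' x = 0 then 0 else Suc (degree (R' x))) \<le> (if R x = 0 then 0 else Suc (degree (R x)))"
      proof
        fix x assume "x \<in> T"
        show "(if R' x = 0 then 0 else Suc (degree (R' x))) \<le> (if R x = 0 then 0 else Suc (degree (R x)))"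
        proof (cases "x = b0")
          case True
          then show ?thesis using shift_lt[of b0 "R b0"] b0 unfolding R'_def by auto
        next
          case False
          then show ?thesis using shift_ne[of "R x" x b0] unfolding R'_def by (cases "R x = 0") auto
        qed
      qed
      show "\<exists>a\<in>T. (if R' a = 0 then 0 else Suc (degree (R' a))) < (if R a = 0 then 0 else Suc (degree (R a)))"
        using b0 shift_lt[of b0 "R b0"] unfolding R'_def by (intro bexI[of _ b0]) auto
    qed
    have allz: "\<forall>\<beta>\<in>T. R' \<beta> = 0" using less.hyps[OF lt less.prems(1,2) eq'] .
    have others: "\<forall>\<beta>\<in>T. \<beta> \<noteq> b0 \<longrightarrow> R \<beta> = 0"
      using allz shift_ne unfolding R'_def by metis
    have sh: "pcompose (R b0) [:1,1:] = R b0"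
    proof -
      have "smult b0 (pcompose (R b0) [:1,1:]) = smult b0 (R b0)" using allz b0 unfolding R'_def by auto
      then show ?thesis using b0nz by (metis smult_cancel)
    qed
    have cst: "poly (R b0) (of_nat n) = poly (R b0) 0" for n :: nat
    proof (induction n)
      case (Suc n)
      have "poly (R b0) (of_nat (Suc n)) = poly (pcompose (R b0) [:1,1:]) (of_nat n)"
        by (simp add: poly_pcompose algebra_simps)
      then show ?case using sh Suc by simp
    qed simp
    define c where "c = poly (R b0) 0"
    have Rc: "R b0 = [:c:]" using cst poly_const_on_nat c_def by blast
    have "(\<Sum>\<beta>\<in>T. poly (R \<beta>) (of_nat n0) * \<beta>^n0) = poly (R b0) (of_nat n0) * b0^n0"
      using others b0 less.prems(1) by (intro sum.remove[THEN trans]) (auto intro!: sum.neutral)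
    then have "c * b0^n0 = 0" using less.prems(3) Rc by simp
    then have "c = 0" using b0nz by simp
    then show False using Rc b0 by simp
  qed
qed



definition EPev :: "(nat \<Rightarrow> complex) \<Rightarrow> bool" where
  "EPev s \<longleftrightarrow> (\<exists>S Q n0. finite S \<and> (\<forall>n\<ge>n0. s n = (\<Sum>\<beta>\<in>S. poly (Q \<beta>) (of_nat n) * \<beta>^n)))"

lemma EPev_cong:
  assumes "EPev s" "\<forall>n\<ge>m. t n = s n"
  shows "EPev t"
proof -
  obtain S Q n0 where r: "finite S" "\<forall>n\<ge>n0. s n = (\<Sum>\<beta>\<in>S. poly (Q \<beta>) (of_nat n) * \<beta>^n)"
    using assms(1) unfolding EPev_def by blast
  have "\<forall>n\<ge>max n0 m. t n = (\<Sum>\<beta>\<in>S. poly (Q \<beta>) (of_nat n) * \<beta>^n)" using r(2) assms(2) by auto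
  then show ?thesis unfolding EPev_def using r(1) by blast
qed

lemma EPev_zero: "EPev (\<lambda>n. 0)"
  unfolding EPev_def by (rule exI[of _ "{}"]) auto

lemma EPev_single: "EPev (\<lambda>n. poly P (of_nat n) * b^n)"
  unfolding EPev_def by (rule exI[of _ "{b}"], rule exI[of _ "\<lambda>_. P"]) auto

lemma EPev_const: "EPev (\<lambda>n. c)"
  using EPev_single[of "[:c:]" 1] by simp

lemma EPev_add:
  assumes "EPev s" "EPev t"
  shows "EPev (\<lambda>n. s n + t n)"
proof -
  obtain S1 Q1 n1 where r1: "finite S1" "\<forall>n\<ge>n1. s n = (\<Sum>\<beta>\<in>S1. poly (Q1 \<beta>) (of_nat n) * \<beta>^n)"
    using assms(1) unfolding EPev_def by blast
  obtain S2 Q2 n2 where r2: "finite S2" "\<forall>n\<ge>n2. t n = (\<Sum>\<beta>\<in>S2. poly (Q2 \<beta>) (of_nat n) * \<beta>^n)"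
    using assms(2) unfolding EPev_def by blast
  define Q where "Q b = (if b \<in> S1 then Q1 b else 0) + (if b \<in> S2 then Q2 b else 0)" for b
  have fin: "finite (S1 \<union> S2)" using r1 r2 by simp
  have e1: "(\<Sum>\<beta>\<in>S1. poly (Q1 \<beta>) (of_nat n) * \<beta>^n)
      = (\<Sum>\<beta>\<in>S1 \<union> S2. poly (if \<beta> \<in> S1 then Q1 \<beta> else 0) (of_nat n) * \<beta>^n)" for n
    by (rule sum.mono_neutral_cong_left[OF fin]) auto
  have e2: "(\<Sum>\<beta>\<in>S2. poly (Q2 \<beta>) (of_nat n) * \<beta>^n)
      = (\<Sum>\<beta>\<in>S1 \<union> S2. poly (if \<beta> \<in> S2 then Q2 \<beta> else 0) (of_nat n) * \<beta>^n)" for n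
    by (rule sum.mono_neutral_cong_left[OF fin]) auto
  have "\<forall>n\<ge>max n1 n2. s n + t n = (\<Sum>\<beta>\<in>S1 \<union> S2. poly (Q \<beta>) (of_nat n) * \<beta>^n)"
    using r1(2) r2(2) e1 e2 by (auto simp: Q_def sum.distrib algebra_simps)
  then show ?thesis unfolding EPev_def using fin by blast
qed

lemma EPev_sum:
  assumes "finite I" "\<forall>i\<in>I. EPev (f i)"
  shows "EPev (\<lambda>n. \<Sum>i\<in>I. f i n)"
  using assms
proof (induction I rule: finite_induct)
  case empty
  then show ?case using EPev_zero by simp
next
  case (insert x F)
  then show ?case using EPev_add[of "f x" "\<lambda>n. \<Sum>i\<in>F. f i n"] by simp
qed

lemma EPev_mexp:
  assumes "EPev s"
  shows "EPev (\<lambda>n. a^n * s n)"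
proof -
  obtain S Q n0 where r: "finite S" "\<forall>n\<ge>n0. s n = (\<Sum>\<beta>\<in>S. poly (Q \<beta>) (of_nat n) * \<beta>^n)"
    using assms(1) unfolding EPev_def by blast
  have "EPev (\<lambda>n. \<Sum>\<beta>\<in>S. poly (Q \<beta>) (of_nat n) * (a * \<beta>)^n)"
    using r(1) EPev_single by (intro EPev_sum) auto
  moreover have "\<forall>n\<ge>n0. a^n * s n = (\<Sum>\<beta>\<in>S. poly (Q \<beta>) (of_nat n) * (a * \<beta>)^n)"
    using r(2) by (auto simp: sum_distrib_left power_mult_distrib algebra_simps)
  ultimately show ?thesis by (rule EPev_cong)
qed

lemma EPev_cmult:
  assumes "EPev s"
  shows "EPev (\<lambda>n. c * s n)"
proof -
  obtain S Q n0 where r: "finite S" "\<forall>n\<ge>n0. s n = (\<Sum>\<beta>\<in>S. poly (Q \<beta>) (of_nat n) * \<beta>^n)"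
    using assms(1) unfolding EPev_def by blast
  have "\<forall>n\<ge>n0. c * s n = (\<Sum>\<beta>\<in>S. poly (smult c (Q \<beta>)) (of_nat n) * \<beta>^n)"
    using r(2) by (simp add: sum_distrib_left mult.assoc)
  then show ?thesis unfolding EPev_def using r(1)
    by (intro exI[of _ S] exI[of _ "\<lambda>\<beta>. smult c (Q \<beta>)"] exI[of _ n0]) simp
qed

lemma pcompose_monom_gen:
  fixes q :: "complex poly"
  shows "pcompose (monom c m) q = smult c (q ^ m)"
proof (induction m)
  case 0
  then show ?case by (simp add: monom_0 pcompose_const)
next
  case (Suc m)
  then show ?case by (simp add: monom_Suc pcompose_pCons)
qed

lemma coeff_11_power:
  "coeff ([:1,1:] ^ m :: complex poly) j = of_nat (m choose j)"
proof (induction m arbitrary: j)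
  case 0
  then show ?case by (cases j) auto
next
  case (Suc m)
  have e: "[:1,1:] ^ Suc m = [:1,1::complex:] ^ m + pCons 0 ([:1,1:] ^ m)"
    by (simp add: algebra_simps)
  show ?case
  proof (cases j)
    case 0
    then show ?thesis using e Suc by simp
  next
    case (Suc i)
    then show ?thesis using e Suc.IH by (simp add: coeff_pCons)
  qed
qed

lemma coeff_L_monom:
  fixes g c :: complex
  shows "coeff (smult g (pcompose (monom c m) [:1,1:]) - monom c m) j
       = g * c * of_nat (m choose j) - (if m = j then c else 0)"
  by (simp add: pcompose_monom_gen coeff_11_power)

lemma solve_shift_poly:
  fixes Q :: "complex poly" and g :: complex
  shows "\<exists>P. smult g (pcompose P [:1,1:]) - P = Q"
proof (induction "degree Q" arbitrary: Q rule: less_induct)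
  case less
  show ?case
  proof (cases "Q = 0")
    case True
    then show ?thesis by (intro exI[of _ 0]) simp
  next
    case False
    define d where "d = degree Q"
    define c where "c = lead_coeff Q"
    define P0 where "P0 = (if g = 1 then monom (c / of_nat (Suc d)) (Suc d) else monom (c/(g-1)) d)"
    define LP0 where "LP0 = smult g (pcompose P0 [:1,1:]) - P0"
    have cd: "coeff LP0 d = c"
    proof (cases "g = 1")
      case True
      have "coeff LP0 d = g * (c / of_nat (Suc d)) * of_nat (Suc d choose d) - 0"
        unfolding LP0_def P0_def using True coeff_L_monom[of g "c / of_nat (Suc d)" "Suc d" d] by simp
      then show ?thesis using True by (simp add: binomial_Suc_n del: of_nat_Suc)
    next
      case False
      have "coeff LP0 d = g * (c / (g - 1)) * of_nat (d choose d) - c / (g - 1)"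
        unfolding LP0_def P0_def using False coeff_L_monom[of g "c / (g - 1)" d d] by simp
      moreover have gm: "g - 1 \<noteq> 0" using False by simp
      moreover have "g * (c / (g - 1)) - c / (g - 1) = c"
      proof -
        have "g * (c / (g - 1)) - c / (g - 1) = (g - 1) * (c / (g - 1))" by (simp only: left_diff_distrib mult_1)
        also have "\<dots> = c" using gm by simp
        finally show ?thesis .
      qed
      ultimately show ?thesis by simp
    qed
    have cgt: "coeff LP0 j = 0" if "j > d" for j
    proof (cases "g = 1")
      case True
      have "coeff LP0 j = g * (c / of_nat (Suc d)) * of_nat (Suc d choose j) - (if Suc d = j then c / of_nat (Suc d) else 0)"
        unfolding LP0_def P0_def using True coeff_L_monom[of g "c / of_nat (Suc d)" "Suc d" j] by simp
      then show ?thesis using True that by (cases "j = Suc d") (simp_all add: binomial_eq_0 del: of_nat_Suc)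
    next
      case False
      have "coeff LP0 j = g * (c / (g - 1)) * of_nat (d choose j) - (if d = j then c / (g - 1) else 0)"
        unfolding LP0_def P0_def using False coeff_L_monom[of g "c / (g - 1)" d j] by simp
      then show ?thesis using that by (simp add: binomial_eq_0)
    qed
    define Q1 where "Q1 = Q - LP0"
    have q1d: "coeff Q1 d = 0" using cd unfolding Q1_def c_def d_def by simp
    have q1gt: "coeff Q1 j = 0" if "j > d" for j
      using cgt[OF that] that unfolding Q1_def d_def by (simp add: coeff_eq_0)
    show ?thesis
    proof (cases "Q1 = 0")
      case True
      then show ?thesis unfolding Q1_def LP0_def by (intro exI[of _ P0]) simp
    next
      case False
      have "degree Q1 \<le> d" using q1gt by (intro degree_le) auto
      moreover have "degree Q1 \<noteq> d" using q1d False by (metis leading_coeff_0_iff)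
      ultimately have "degree Q1 < degree Q" unfolding d_def by simp
      then obtain P1 where P1: "smult g (pcompose P1 [:1,1:]) - P1 = Q1" using less by blast
      have "smult g (pcompose (P0 + P1) [:1,1:]) - (P0 + P1) = LP0 + Q1"
        unfolding LP0_def P1[symmetric] by (simp add: pcompose_add smult_add_right algebra_simps)
      then show ?thesis unfolding Q1_def by (intro exI[of _ "P0 + P1"]) simp
    qed
  qed
qed

lemma solve_shift:
  fixes Q :: "complex poly" and g :: complex
  shows "\<exists>P. \<forall>x. g * poly P (x + 1) - poly P x = poly Q x"
proof -
  obtain P where P: "smult g (pcompose P [:1,1:]) - P = Q" using solve_shift_poly by blast
  have "poly Q x = g * poly P (x + 1) - poly P x" for x
  proof -
    have "poly Q x = poly (smult g (pcompose P [:1,1:]) - P) x" using P by simp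
    also have "\<dots> = g * poly P (x + 1) - poly P x" by (simp add: poly_pcompose algebra_simps)
    finally show ?thesis .
  qed
  then show ?thesis by auto
qed

lemma EPev_psum:
  assumes "EPev w" "\<forall>n. u (Suc n) = u n + w (Suc n)"
  shows "EPev u"
proof -
  obtain S Q n0 where r: "finite S" "\<forall>n\<ge>n0. w n = (\<Sum>\<beta>\<in>S. poly (Q \<beta>) (of_nat n) * \<beta>^n)"
    using assms(1) unfolding EPev_def by blast
  have "\<forall>\<beta>. \<exists>P. \<forall>x. \<beta> * poly P (x + 1) - poly P x = \<beta> * poly (Q \<beta>) (x + 1)"
  proof
    fix \<beta>
    obtain P where "\<forall>x. \<beta> * poly P (x + 1) - poly P x = poly (smult \<beta> (pcompose (Q \<beta>) [:1,1:])) x"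
      using solve_shift by blast
    then show "\<exists>P. \<forall>x. \<beta> * poly P (x + 1) - poly P x = \<beta> * poly (Q \<beta>) (x + 1)"
      by (auto simp: poly_pcompose algebra_simps)
  qed
  then obtain P where P: "\<And>\<beta> x. \<beta> * poly (P \<beta>) (x + 1) - poly (P \<beta>) x = \<beta> * poly (Q \<beta>) (x + 1)"
    by metis
  define H where "H n = (\<Sum>\<beta>\<in>S. poly (P \<beta>) (of_nat n) * \<beta>^n)" for n
  have EH: "EPev H" unfolding H_def using r(1) EPev_single by (intro EPev_sum) auto
  have Hs: "H (Suc n) = H n + w (Suc n)" if "n \<ge> n0" for n
  proof -
    have "H (Suc n) - H n = (\<Sum>\<beta>\<in>S. \<beta>^n * (\<beta> * poly (P \<beta>) (of_nat n + 1) - poly (P \<beta>) (of_nat n)))"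
      unfolding H_def by (simp add: sum_subtractf[symmetric] algebra_simps)
    also have "\<dots> = (\<Sum>\<beta>\<in>S. poly (Q \<beta>) (of_nat (Suc n)) * \<beta>^(Suc n))"
      by (intro sum.cong refl, subst P) (simp add: algebra_simps)
    also have "\<dots> = w (Suc n)" using r(2) that by simp
    finally show ?thesis by (metis diff_eq_eq add.commute)
  qed
  define c where "c = u n0 - H n0"
  have "u n = H n + c" if "n \<ge> n0" for n
    using that
  proof (induction n rule: dec_induct)
    case base
    then show ?case unfolding c_def by simp
  next
    case (step n)
    then show ?case using Hs[OF step(1)] assms(2) by simp
  qed
  then have "\<forall>n\<ge>n0. u n = H n + c" by blast
  with EPev_add[OF EH EPev_const] show ?thesis by (rule EPev_cong)
qed

lemma EPev_rec:
  assumes "EPev s" "a \<noteq> 0" "\<forall>n. t (Suc n) = a * t n + s (Suc n)"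
  shows "EPev t"
proof -
  define u where "u n = t n / a^n" for n
  define w where "w n = (1/a)^n * s n" for n
  have Ew: "EPev w" unfolding w_def using EPev_mexp[OF assms(1)] .
  have "\<forall>n. u (Suc n) = u n + w (Suc n)"
    using assms(2,3) by (auto simp: u_def w_def field_simps power_divide)
  then have Eu: "EPev u" using EPev_psum Ew by blast
  have "\<forall>n\<ge>0. t n = a^n * u n" using assms(2) by (simp add: u_def)
  with EPev_mexp[OF Eu, of a] show ?thesis by (rule EPev_cong)
qed



lemma EPev_rat:
  fixes B A :: "complex poly" and F :: "complex fps"
  assumes "F * fps_of_poly B = fps_of_poly A" "poly B 0 \<noteq> 0"
  shows "EPev (\<lambda>n. F $ n)"
  using assms
proof (induction "degree B" arbitrary: B F A rule: less_induct)
  case less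
  show ?case
  proof (cases "degree B = 0")
    case True
    define b where "b = coeff B 0"
    have Bb: "B = [:b:]" using degree_0_id[OF True] b_def by simp
    have b0: "b \<noteq> 0" using less.prems(2) Bb by simp
    have "F $ n * b = coeff A n" for n
      using arg_cong[OF less.prems(1), of "\<lambda>G. G $ n"] Bb by (simp add: fps_of_poly_const)
    then have "\<forall>n\<ge>Suc (degree A). F $ n = 0" using b0
      by (metis Suc_le_eq coeff_eq_0 mult_eq_0_iff)
    then show ?thesis by (intro EPev_cong[OF EPev_zero]) auto
  next
    case False
    have "\<not> (\<exists>a l. a \<noteq> 0 \<and> l = 0 \<and> B = pCons a l)" using False by auto
    then obtain r where r: "poly B r = 0" using fundamental_theorem_of_algebra_alt by blast
    have rnz: "r \<noteq> 0" using r less.prems(2) by auto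
    obtain B1 where B1: "B = [:-r,1:] * B1" using r poly_eq_0_iff_dvd by (metis dvdE)
    have B1nz: "B1 \<noteq> 0" using B1 False by auto
    have "degree B = degree [:-r,1:] + degree B1" unfolding B1 by (rule degree_mult_eq) (use B1nz in auto)
    then have degB: "degree B = Suc (degree B1)" by simp
    have pB1: "poly B1 0 \<noteq> 0" using less.prems(2) B1 by auto
    define G where "G = F * fps_of_poly [:-r,1:]"
    have "G * fps_of_poly B1 = fps_of_poly A"
      using less.prems(1) unfolding B1 fps_of_poly_mult G_def by (simp only: mult.assoc)
    then have EG: "EPev (\<lambda>n. G $ n)" using less.hyps degB pB1 by auto
    have Gs: "G $ Suc n = F $ n - r * F $ Suc n" for n
      unfolding G_def by (simp add: fps_of_poly_pCons algebra_simps)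
    have rec: "\<forall>n. F $ Suc n = (1/r) * F $ n + (-(1/r)) * G $ Suc n"
      using Gs rnz by (auto simp: field_simps)
    show ?thesis
      by (rule EPev_rec[OF EPev_cmult[OF EG, of "-(1/r)"], of "1/r"]) (use rnz rec in auto)
  qed
qed

lemma ep_compare:
  fixes Q1 Q2 :: "complex \<Rightarrow> complex poly" and f :: "complex \<Rightarrow> complex"
  assumes "finite S" "0 \<notin> S" "\<forall>\<alpha>\<in>S. f \<alpha> \<noteq> 0"
   "\<forall>n\<ge>n0. (\<Sum>\<alpha>\<in>S. poly (Q2 \<alpha>) (of_nat n) * (f \<alpha>)^n) = (\<Sum>\<alpha>\<in>S. poly (Q1 \<alpha>) (of_nat n) * \<alpha>^n)"
  shows "\<forall>\<beta>\<in>S. (\<Sum>\<alpha>\<in>{\<alpha>\<in>S. f \<alpha> = \<beta>}. Q2 \<alpha>) = Q1 \<beta>"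
proof -
  define T where "T = S \<union> f ` S"
  define R where "R \<beta> = (\<Sum>\<alpha>\<in>{\<alpha>\<in>S. f \<alpha> = \<beta>}. Q2 \<alpha>) - (if \<beta> \<in> S then Q1 \<beta> else 0)" for \<beta>
  have fT: "finite T" "0 \<notin> T" using assms by (auto simp: T_def)
  have "\<forall>n\<ge>n0. (\<Sum>\<beta>\<in>T. poly (R \<beta>) (of_nat n) * \<beta>^n) = 0"
  proof (intro allI impI)
    fix n :: nat assume n: "n \<ge> n0"
    have e1: "(\<Sum>\<beta>\<in>T. poly (\<Sum>\<alpha>\<in>{\<alpha>\<in>S. f \<alpha> = \<beta>}. Q2 \<alpha>) (of_nat n) * \<beta>^n)
         = (\<Sum>\<alpha>\<in>S. poly (Q2 \<alpha>) (of_nat n) * (f \<alpha>)^n)"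
    proof -
      have "(\<Sum>\<beta>\<in>T. poly (\<Sum>\<alpha>\<in>{\<alpha>\<in>S. f \<alpha> = \<beta>}. Q2 \<alpha>) (of_nat n) * \<beta>^n)
          = (\<Sum>\<beta>\<in>T. \<Sum>\<alpha>\<in>{\<alpha>\<in>S. f \<alpha> = \<beta>}. poly (Q2 \<alpha>) (of_nat n) * (f \<alpha>)^n)"
        by (intro sum.cong refl) (auto simp: poly_sum sum_distrib_right intro!: sum.cong)
      also have "\<dots> = (\<Sum>\<alpha>\<in>S. poly (Q2 \<alpha>) (of_nat n) * (f \<alpha>)^n)"
        by (rule sum.group) (auto simp: T_def assms(1))
      finally show ?thesis .
    qed
    have e2: "(\<Sum>\<beta>\<in>T. poly (if \<beta> \<in> S then Q1 \<beta> else 0) (of_nat n) * \<beta>^n)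
        = (\<Sum>\<alpha>\<in>S. poly (Q1 \<alpha>) (of_nat n) * \<alpha>^n)"
      by (rule sum.mono_neutral_cong_right) (auto simp: T_def assms(1))
    have "(\<Sum>\<beta>\<in>T. poly (R \<beta>) (of_nat n) * \<beta>^n)
       = (\<Sum>\<beta>\<in>T. poly (\<Sum>\<alpha>\<in>{\<alpha>\<in>S. f \<alpha> = \<beta>}. Q2 \<alpha>) (of_nat n) * \<beta>^n)
         - (\<Sum>\<beta>\<in>T. poly (if \<beta> \<in> S then Q1 \<beta> else 0) (of_nat n) * \<beta>^n)"
      unfolding R_def by (simp only: poly_diff left_diff_distrib sum_subtractf)
    also have "\<dots> = 0" using e1 e2 assms(4) n by simp
    finally show "(\<Sum>\<beta>\<in>T. poly (R \<beta>) (of_nat n) * \<beta>^n) = 0" .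
  qed
  then have "\<forall>\<beta>\<in>T. R \<beta> = 0" using ep_unique fT by blast
  then show ?thesis by (auto simp: R_def T_def)
qed

lemma coeff_pcompose_scale:
  fixes Q :: "complex poly"
  shows "coeff (pcompose Q [:0, c:]) j = c^j * coeff Q j"
proof (induction Q arbitrary: j)
  case 0
  then show ?case by simp
next
  case (pCons a p)
  show ?case
  proof (cases j)
    case 0
    then show ?thesis by (simp add: pcompose_pCons)
  next
    case (Suc i)
    then show ?thesis using pCons.IH[of i] by (simp add: pcompose_pCons coeff_pCons)
  qed
qed

lemma monomial_eigen:
  fixes Q :: "complex poly" and lam :: complex and p :: nat
  assumes "Q \<noteq> 0" "p \<ge> 2" "pcompose Q [:0, of_nat p:] = smult lam Q"
  shows "lam = of_nat p ^ degree Q \<and> Q = monom (lead_coeff Q) (degree Q)"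
proof -
  have c: "of_nat p ^ j * coeff Q j = lam * coeff Q j" for j
    using arg_cong[OF assms(3), of "\<lambda>P. coeff P j"] by (simp add: coeff_pcompose_scale)
  have l: "lam = of_nat p ^ degree Q" using c[of "degree Q"] assms(1) by simp
  have "coeff Q j = 0" if "j \<noteq> degree Q" for j
  proof (rule ccontr)
    assume "coeff Q j \<noteq> 0"
    then have "(of_nat p ^ j :: complex) = of_nat p ^ degree Q" using c[of j] l by simp
    then have "p ^ j = p ^ degree Q" by (metis of_nat_eq_iff of_nat_power)
    then have "j = degree Q" using assms(2) by (simp add: power_inject_exp)
    then show False using that by simp
  qed
  then have "Q = monom (lead_coeff Q) (degree Q)"
    by (intro poly_eqI) (auto simp: coeff_monom)
  then show ?thesis using l by simp
qed

lemma XDk_nth: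
  "((fps_XD ^^ k) (inverse (1 - fps_X) :: complex fps)) $ n = of_nat n ^ k"
  by (induction k) (simp_all add: fps_inverse_one_minus_fps_X)

lemma XDk_poly:
  "\<exists>N. fps_of_poly N = (1 - fps_X)^(Suc k) * (fps_XD ^^ k) (inverse (1 - fps_X) :: complex fps)"
proof (induction k)
  case 0
  have "(1 - fps_X) * inverse (1 - fps_X :: complex fps) = 1"
    by (rule inverse_mult_eq_1') simp
  then show ?case by (intro exI[of _ 1]) simp
next
  case (Suc k)
  then obtain N where N: "fps_of_poly N = (1 - fps_X)^(Suc k) * (fps_XD ^^ k) (inverse (1 - fps_X) :: complex fps)"
    by blast
  define G where "G = (fps_XD ^^ k) (inverse (1 - fps_X) :: complex fps)"
  define E where "E = (1 - fps_X :: complex fps)^(Suc k)"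
  have dE: "fps_deriv E = - (of_nat (Suc k)) * (1 - fps_X)^k"
  proof -
    have "fps_deriv E = of_nat (Suc k) * fps_deriv (1 - fps_X) * (1 - fps_X)^(Suc k - 1)"
      unfolding E_def by (rule fps_deriv_power')
    then show ?thesis by (simp del: of_nat_Suc)
  qed
  have dN: "fps_of_poly (pderiv N) = fps_deriv E * G + E * fps_deriv G"
    using N by (simp add: fps_of_poly_pderiv E_def G_def)
  have s1: "(fps_XD ^^ Suc k) (inverse (1 - fps_X) :: complex fps) = fps_X * fps_deriv G"
    unfolding G_def by (simp add: fps_XD_def)
  have s2: "(1 - fps_X :: complex fps)^(Suc (Suc k)) = (1 - fps_X) * E" unfolding E_def by simp
  have alg: "X * (Y * (E' * dG)) = X * (Y * pN + c * (E' * G'))"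
    if "pN = dE * G' + E' * dG" "dE = - c * Yk" "E' = Y * Yk" for X Y E' dG pN c G' dE Yk :: "complex fps"
    using that by algebra
  have "(1 - fps_X)^(Suc (Suc k)) * (fps_XD ^^ Suc k) (inverse (1 - fps_X) :: complex fps)
      = fps_X * ((1 - fps_X) * (E * fps_deriv G))"
    unfolding s1 s2 by (simp only: ac_simps)
  also have "\<dots> = fps_X * ((1 - fps_X) * fps_of_poly (pderiv N) + of_nat (Suc k) * (E * G))"
    by (rule alg[OF dN dE]) (simp add: E_def)
  also have "\<dots> = fps_of_poly ([:0,1:] * ([:1,-1:] * pderiv N + smult (of_nat (Suc k)) N))"
    using N unfolding E_def G_def
    by (simp add: fps_of_poly_mult fps_of_poly_add fps_of_poly_smult fps_of_poly_pCons fps_of_nat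
                  fps_const_neg[symmetric] del: of_nat_Suc)
  finally show ?case by metis
qed



lemma EPev_normal:
  assumes "EPev s"
  obtains S Q n0 where "finite S" "0 \<notin> S" "\<forall>\<alpha>\<in>S. Q \<alpha> \<noteq> 0" "n0 \<ge> 1"
    "\<forall>n\<ge>n0. s n = (\<Sum>\<alpha>\<in>S. poly (Q \<alpha>) (of_nat n) * \<alpha>^n)"
proof -
  obtain S0 Q n1 where r: "finite S0" "\<forall>n\<ge>n1. s n = (\<Sum>\<alpha>\<in>S0. poly (Q \<alpha>) (of_nat n) * \<alpha>^n)"
    using assms unfolding EPev_def by blast
  define S where "S = {\<alpha>\<in>S0. \<alpha> \<noteq> 0 \<and> Q \<alpha> \<noteq> 0}"
  have "\<forall>n\<ge>max n1 1. s n = (\<Sum>\<alpha>\<in>S. poly (Q \<alpha>) (of_nat n) * \<alpha>^n)"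
  proof (intro allI impI)
    fix n :: nat assume n: "n \<ge> max n1 1"
    have "(\<Sum>\<alpha>\<in>S0. poly (Q \<alpha>) (of_nat n) * \<alpha>^n) = (\<Sum>\<alpha>\<in>S. poly (Q \<alpha>) (of_nat n) * \<alpha>^n)"
      by (rule sum.mono_neutral_right) (use r(1) n in \<open>auto simp: S_def\<close>)
    then show "s n = (\<Sum>\<alpha>\<in>S. poly (Q \<alpha>) (of_nat n) * \<alpha>^n)" using r(2) n by simp
  qed
  moreover have "finite S" "0 \<notin> S" "\<forall>\<alpha>\<in>S. Q \<alpha> \<noteq> 0" using r(1) by (auto simp: S_def)
  ultimately show thesis using that[of S Q "max n1 1"] by auto
qed

lemma complexify_mult: "fps_complexify (X * Y) = fps_complexify X * fps_complexify Y"
  unfolding fps_complexify_def by (intro fps_ext) (simp add: fps_mult_nth)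

lemma complexify_poly: "fps_complexify (fps_of_poly P) = fps_of_poly (map_poly complex_of_real P)"
  unfolding fps_complexify_def by (intro fps_ext) (simp add: coeff_map_poly)

lemma fps_of_poly_1m: "fps_of_poly [:1, -1:] = (1 - fps_X :: 'a::comm_ring_1 fps)"
  by (simp add: fps_of_poly_pCons fps_const_neg[symmetric] algebra_simps)

theorem mainTheorem3:
  fixes A B :: "real poly" and lam :: "nat \<Rightarrow> real"
  assumes "in_R A B"
    and "A \<noteq> 0"
    and "\<forall>p::nat. p \<ge> 2 \<longrightarrow> lam p \<noteq> 0 \<and>
           hecke_U p (taylor_rf A B) = fps_const (lam p) * taylor_rf A B"
  shows "poles_rf A B \<subseteq> {1} \<and>
         (\<exists>(k::nat) (C::complex).
            fps_complexify (taylor_rf A B)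
              = fps_const C * (fps_XD ^^ k) (inverse (1 - fps_X)) \<and>
            (\<forall>p::nat. p \<ge> 2 \<longrightarrow> lam p = real p ^ k))"
proof -
  define F where "F = taylor_rf A B"
  define a where "a n = F $ n" for n
  have B0: "poly B 0 \<noteq> 0" and dAB: "degree A < degree B" using assms(1) by (auto simp: in_R_def)
  have Bc0: "fps_of_poly B $ 0 \<noteq> 0" using B0 by (simp add: poly_0_coeff_0)
  have FB: "F * fps_of_poly B = fps_of_poly A"
    unfolding F_def taylor_rf_def using Bc0 by (simp add: fps_divide_unit mult.assoc inverse_mult_eq_1)
  have hec: "a (p * n) = lam p * a n" if "p \<ge> 2" for p n
  proof -
    have "hecke_U p F $ n = (fps_const (lam p) * F) $ n" using assms(3) that F_def by simp
    then show ?thesis by (simp add: hecke_U_def a_def)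
  qed
  have a1: "a 1 \<noteq> 0"
  proof
    assume a10: "a 1 = 0"
    have an0: "a n = 0" if "n \<ge> 1" for n
    proof (cases "n = 1")
      case True then show ?thesis using a10 by simp
    next
      case False then have "n \<ge> 2" using that by simp
      then show ?thesis using hec[of n 1] a10 by simp
    qed
    have "F = fps_const (a 0)"
    proof (intro fps_ext)
      fix n show "F $ n = fps_const (a 0) $ n" using an0[of n] by (cases n) (auto simp: a_def)
    qed
    then have "fps_of_poly A = fps_of_poly (smult (a 0) B)" using FB by (simp add: fps_of_poly_smult)
    then have "A = smult (a 0) B" by (simp add: fps_of_poly_eq_iff)
    then show False using assms(2) dAB by (cases "a 0 = 0") auto
  qed
  have anz: "a n \<noteq> 0" if "n \<ge> 1" for n
  proof (cases "n = 1")
    case True then show ?thesis using a1 by simp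
  next
    case False then have "n \<ge> 2" using that by simp
    then show ?thesis using hec[of n 1] a1 assms(3) by simp
  qed
  define ac where "ac n = complex_of_real (a n)" for n
  define Ac where "Ac = map_poly complex_of_real A"
  define Bc where "Bc = map_poly complex_of_real B"
  have FBc: "fps_complexify F * fps_of_poly Bc = fps_of_poly Ac"
    using arg_cong[OF FB, of fps_complexify] by (simp add: complexify_mult complexify_poly Ac_def Bc_def)
  have Bc0': "poly Bc 0 \<noteq> 0" using B0 by (simp add: Bc_def poly_0_coeff_0 coeff_map_poly)
  have "EPev (\<lambda>n. fps_complexify F $ n)" by (rule EPev_rat[OF FBc Bc0'])
  moreover have "(\<lambda>n. fps_complexify F $ n) = ac" by (auto simp: fps_complexify_def ac_def a_def)
  ultimately have EP: "EPev ac" by simp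
  obtain S Q n0 where S: "finite S" "0 \<notin> S" "\<forall>\<alpha>\<in>S. Q \<alpha> \<noteq> 0" "n0 \<ge> 1"
    "\<forall>n\<ge>n0. ac n = (\<Sum>\<alpha>\<in>S. poly (Q \<alpha>) (of_nat n) * \<alpha>^n)"
    using EPev_normal[OF EP] by blast
  have hecC: "ac (p * n) = complex_of_real (lam p) * ac n" if "p \<ge> 2" for p n
    using hec[OF that] by (simp add: ac_def)
  have lamnz: "complex_of_real (lam p) \<noteq> 0" if "p \<ge> 2" for p using assms(3) that by simp
  have cmp: "\<forall>\<beta>\<in>S. (\<Sum>\<alpha>\<in>{\<alpha>\<in>S. \<alpha>^p = \<beta>}. pcompose (Q \<alpha>) [:0, of_nat p:])
               = smult (complex_of_real (lam p)) (Q \<beta>)" if p2: "p \<ge> 2" for p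
  proof -
    have "\<forall>n\<ge>n0. (\<Sum>\<alpha>\<in>S. poly (pcompose (Q \<alpha>) [:0, of_nat p:]) (of_nat n) * (\<alpha>^p)^n)
         = (\<Sum>\<alpha>\<in>S. poly (smult (complex_of_real (lam p)) (Q \<alpha>)) (of_nat n) * \<alpha>^n)"
    proof (intro allI impI)
      fix n :: nat assume n: "n \<ge> n0"
      have "n \<le> p * n" using p2 by simp
      then have pn: "p * n \<ge> n0" using n by linarith
      have "(\<Sum>\<alpha>\<in>S. poly (pcompose (Q \<alpha>) [:0, of_nat p:]) (of_nat n) * (\<alpha>^p)^n)
          = (\<Sum>\<alpha>\<in>S. poly (Q \<alpha>) (of_nat (p * n)) * \<alpha>^(p * n))"
      proof (intro sum.cong refl)
        fix \<alpha> :: complex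
        have pc: "(\<alpha>^p)^n = \<alpha>^(p * n)" by (simp add: power_mult)
        show "poly (pcompose (Q \<alpha>) [:0, of_nat p:]) (of_nat n) * (\<alpha>^p)^n = poly (Q \<alpha>) (of_nat (p * n)) * \<alpha>^(p * n)"
          unfolding pc by (simp add: poly_pcompose mult.commute)
      qed
      also have "\<dots> = ac (p * n)" using S(5) pn by simp
      also have "\<dots> = complex_of_real (lam p) * ac n" using hecC p2 by simp
      also have "\<dots> = (\<Sum>\<alpha>\<in>S. poly (smult (complex_of_real (lam p)) (Q \<alpha>)) (of_nat n) * \<alpha>^n)"
        using S(5) n by (simp add: sum_distrib_left algebra_simps)
      finally show "(\<Sum>\<alpha>\<in>S. poly (pcompose (Q \<alpha>) [:0, of_nat p:]) (of_nat n) * (\<alpha>^p)^n)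
         = (\<Sum>\<alpha>\<in>S. poly (smult (complex_of_real (lam p)) (Q \<alpha>)) (of_nat n) * \<alpha>^n)" .
    qed
    note eq = this
    show ?thesis by (rule ep_compare[OF S(1) S(2) _ eq]) (use S(2) in auto)
  qed
  have surj2: "\<exists>\<alpha>\<in>S. \<alpha>^2 = \<beta>" if "\<beta> \<in> S" for \<beta>
  proof (rule ccontr)
    assume "\<not> (\<exists>\<alpha>\<in>S. \<alpha>^2 = \<beta>)"
    then have emp: "{\<alpha>\<in>S. \<alpha>^2 = \<beta>} = {}" by auto
    have "2 \<ge> (2::nat)" by simp
    note c2 = cmp[OF this, rule_format, OF that]
    have "smult (complex_of_real (lam 2)) (Q \<beta>) = 0" using c2 unfolding emp by simp
    then show False using lamnz[of 2] S(3) that by simp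
  qed
  have img: "(\<lambda>\<alpha>. \<alpha>^2) ` S = S"
  proof -
    have sub: "S \<subseteq> (\<lambda>\<alpha>. \<alpha>^2) ` S" using surj2 by force
    have "card ((\<lambda>\<alpha>. \<alpha>^2) ` S) \<le> card S" by (rule card_image_le[OF S(1)])
    moreover have "card S \<le> card ((\<lambda>\<alpha>. \<alpha>^2) ` S)" by (rule card_mono[OF finite_imageI[OF S(1)] sub])
    ultimately show ?thesis using card_subset_eq[OF finite_imageI[OF S(1)] sub] by simp
  qed
  have pow: "\<alpha>^(2^i) \<in> S" if "\<alpha> \<in> S" for \<alpha> i
  proof (induction i)
    case 0 then show ?case using that by simp
  next
    case (Suc i)
    have "\<alpha>^(2^Suc i) = (\<alpha>^(2^i))^2" by (metis power_Suc mult.commute power_mult)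
    then show ?case using Suc img by (metis image_eqI)
  qed
  have rou: "\<exists>e>0. \<alpha>^e = 1" if aS: "\<alpha> \<in> S" for \<alpha>
  proof -
    have "\<not> inj (\<lambda>i::nat. \<alpha>^(2^i))"
    proof
      assume "inj (\<lambda>i::nat. \<alpha>^(2^i))"
      then have "infinite (range (\<lambda>i::nat. \<alpha>^(2^i)))" using range_inj_infinite by blast
      moreover have "range (\<lambda>i. \<alpha>^(2^i)) \<subseteq> S" using pow aS by auto
      ultimately show False using S(1) finite_subset by blast
    qed
    then obtain i j where ij: "i \<noteq> j" "\<alpha>^(2^i) = \<alpha>^(2^j)" unfolding inj_def by blast
    then have "\<exists>i j. i < j \<and> \<alpha>^(2^i) = \<alpha>^(2^j)" by (metis linorder_neqE_nat)
    then obtain i j where ij: "i < j" "\<alpha>^(2^i) = \<alpha>^(2^j)" by blast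
    have lt: "2^i < (2::nat)^j" using ij(1) by simp
    have "\<alpha>^(2^j) = \<alpha>^(2^i) * \<alpha>^(2^j - 2^i)" using lt
      by (metis le_add_diff_inverse less_imp_le power_add)
    moreover have "\<alpha>^(2^i) \<noteq> 0" using aS S(2) by auto
    ultimately have "\<alpha>^(2^j - 2^i) = 1" using ij(2) by (metis mult_cancel_left1)
    then show ?thesis using lt by (intro exI[of _ "2^j - 2^i"]) auto
  qed
  then obtain e where e: "\<forall>\<alpha>\<in>S. e \<alpha> > 0 \<and> \<alpha>^(e \<alpha>) = 1" by metis
  define N where "N = (\<Prod>\<alpha>\<in>S. e \<alpha>)"
  have Npos: "N > 0" using e S(1) by (simp add: N_def prod_pos)
  have aN: "\<alpha>^N = 1" if "\<alpha> \<in> S" for \<alpha>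
  proof -
    have "e \<alpha> dvd N" unfolding N_def using that S(1) by auto
    then obtain m where "N = e \<alpha> * m" by (auto elim: dvdE)
    then show ?thesis using e that by (simp add: power_mult)
  qed
  define P where "P = Suc N"
  have P2: "P \<ge> 2" using Npos by (simp add: P_def)
  have aP: "\<alpha>^P = \<alpha>" if "\<alpha> \<in> S" for \<alpha> using aN[OF that] by (simp add: P_def)
  have eig: "pcompose (Q \<beta>) [:0, of_nat P:] = smult (complex_of_real (lam P)) (Q \<beta>)" if bS: "\<beta> \<in> S" for \<beta>
  proof -
    have sing: "{\<alpha>\<in>S. \<alpha>^P = \<beta>} = {\<beta>}" using aP bS by auto
    show ?thesis using cmp[OF P2, rule_format, OF bS] unfolding sing by simp
  qed
  have mon: "complex_of_real (lam P) = of_nat P ^ degree (Q \<beta>) \<and> Q \<beta> = monom (lead_coeff (Q \<beta>)) (degree (Q \<beta>))"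
    if bS: "\<beta> \<in> S" for \<beta>
    using monomial_eigen[OF S(3)[rule_format, OF bS] P2 eig[OF bS]] .
  have Sne: "S \<noteq> {}"
  proof
    assume "S = {}"
    then have "ac n0 = 0" using S(5) by simp
    then show False using anz[OF S(4)] by (simp add: ac_def)
  qed
  then obtain \<alpha>1 where \<alpha>1: "\<alpha>1 \<in> S" by blast
  define k where "k = degree (Q \<alpha>1)"
  have degk: "degree (Q \<beta>) = k" if bS: "\<beta> \<in> S" for \<beta>
  proof -
    have "(of_nat P ^ degree (Q \<beta>) :: complex) = of_nat P ^ k" using mon[OF bS] mon[OF \<alpha>1] k_def by simp
    then have "P ^ degree (Q \<beta>) = P ^ k" by (metis of_nat_eq_iff of_nat_power)
    then show ?thesis using P2 by (simp add: power_inject_exp)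
  qed
  have form: "ac n = of_nat n ^ k * (\<Sum>\<alpha>\<in>S. lead_coeff (Q \<alpha>) * \<alpha>^n)" if n: "n \<ge> n0" for n
  proof -
    have "ac n = (\<Sum>\<alpha>\<in>S. poly (Q \<alpha>) (of_nat n) * \<alpha>^n)" using S(5) n by simp
    also have "\<dots> = (\<Sum>\<alpha>\<in>S. of_nat n ^ k * (lead_coeff (Q \<alpha>) * \<alpha>^n))"
    proof (intro sum.cong refl)
      fix \<alpha> assume aS: "\<alpha> \<in> S"
      have "poly (Q \<alpha>) (of_nat n) = poly (monom (lead_coeff (Q \<alpha>)) k) (of_nat n)"
        using mon[OF aS] degk[OF aS] by metis
      then show "poly (Q \<alpha>) (of_nat n) * \<alpha>^n = of_nat n ^ k * (lead_coeff (Q \<alpha>) * \<alpha>^n)"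
        by (simp add: poly_monom)
    qed
    also have "\<dots> = of_nat n ^ k * (\<Sum>\<alpha>\<in>S. lead_coeff (Q \<alpha>) * \<alpha>^n)" by (simp add: sum_distrib_left)
    finally show ?thesis .
  qed
  define c0 where "c0 = (\<Sum>\<alpha>\<in>S. lead_coeff (Q \<alpha>))"
  have lamk: "lam p = real p ^ k" if p2: "p \<ge> 2" for p
  proof -
    define m where "m = N * n0"
    have m1: "m \<ge> n0" "m \<ge> 1" using Npos S(4) by (simp_all add: m_def)
    have "m \<le> p * m" using p2 by simp
    then have pm: "p * m \<ge> n0" using m1 by linarith
    have am: "\<alpha>^m = 1" "\<alpha>^(p*m) = 1" if "\<alpha> \<in> S" for \<alpha>
    proof -
      show "\<alpha>^m = 1" using aN[OF that] by (simp add: m_def power_mult)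
      have e: "p * m = N * (n0 * p)" by (simp add: m_def)
      show "\<alpha>^(p*m) = 1" unfolding e power_mult using aN[OF that] by simp
    qed
    have e1: "ac m = of_nat m ^ k * c0" using form[OF m1(1)] am(1) by (simp add: c0_def)
    have e2: "ac (p * m) = of_nat (p * m) ^ k * c0" using form[OF pm] am(2) by (simp add: c0_def)
    have nz: "ac m \<noteq> 0" using anz[OF m1(2)] by (simp add: ac_def)
    have "of_nat p ^ k * ac m = complex_of_real (lam p) * ac m"
    proof -
      have "ac (p * m) = of_nat p ^ k * ac m" using e1 e2 by (simp add: power_mult_distrib)
      then show ?thesis using hecC[OF p2, of m] by metis
    qed
    then have "complex_of_real (lam p) = of_nat p ^ k" using nz by simp
    then have "complex_of_real (lam p) = complex_of_real (real p ^ k)" by simp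
    then show ?thesis using of_real_eq_iff by blast
  qed
  have an: "a n = a 1 * real n ^ k" if "n \<ge> 1" for n
  proof (cases "n = 1")
    case True then show ?thesis by simp
  next
    case False then have "n \<ge> 2" using that by simp
    then show ?thesis using hec[of n 1] lamk[of n] by simp
  qed
  have a0: "a 0 = a 1 * real 0 ^ k"
  proof (cases "k = 0")
    case False
    have "a 0 = 2^k * a 0" using hec[of 2 0] lamk[of 2] by simp
    moreover have "(2::real)^k \<noteq> 1"
    proof -
      have "(1::real) < 2^k" using False by (intro one_less_power) auto
      then show ?thesis by linarith
    qed
    ultimately have "a 0 = 0" by (metis mult_cancel_right2)
    then show ?thesis using False by simp
  next
    case True
    have an1: "a n = a 1" if "n \<ge> 1" for n using an[OF that] True by simp
    define D where "D = F * fps_of_poly [:1, -1:]"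
    have Deq: "D = fps_of_poly [:a 0, a 1 - a 0:]"
    proof (intro fps_ext)
      fix n
      have "D $ n = a n - (if n = 0 then 0 else a (n - 1))"
        by (simp add: D_def fps_of_poly_1m a_def algebra_simps)
      moreover have "a n - (if n = 0 then 0 else a (n - 1)) = coeff [:a 0, a 1 - a 0:] n"
      proof (cases n)
        case 0 then show ?thesis by simp
      next
        case (Suc i)
        then show ?thesis using an1[of n] an1[of i] by (cases i) (auto simp: coeff_pCons)
      qed
      ultimately show "D $ n = fps_of_poly [:a 0, a 1 - a 0:] $ n" by simp
    qed
    have "fps_of_poly (A * [:1, -1:]) = fps_of_poly A * fps_of_poly [:1, -1:]" by (rule fps_of_poly_mult)
    also have "\<dots> = F * fps_of_poly B * fps_of_poly [:1, -1:]" using FB by simp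
    also have "\<dots> = D * fps_of_poly B" unfolding D_def by (simp only: ac_simps)
    also have "\<dots> = fps_of_poly [:a 0, a 1 - a 0:] * fps_of_poly B" using Deq by simp
    also have "\<dots> = fps_of_poly ([:a 0, a 1 - a 0:] * B)" by (rule fps_of_poly_mult[symmetric])
    finally have "fps_of_poly (A * [:1, -1:]) = fps_of_poly ([:a 0, a 1 - a 0:] * B)" .
    then have PE: "A * [:1, -1:] = [:a 0, a 1 - a 0:] * B" by (simp add: fps_of_poly_eq_iff)
    show ?thesis
    proof (rule ccontr)
      assume "a 0 \<noteq> a 1 * real 0 ^ k"
      then have ne: "a 1 - a 0 \<noteq> 0" using True by simp
      have "degree (A * [:1, -1:]) = degree A + degree [:1, -1::real:]" using assms(2) by (subst degree_mult_eq) auto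
      then have "degree (A * [:1, -1:]) = degree A + 1" by simp
      moreover have "degree ([:a 0, a 1 - a 0:] * B) = 1 + degree B"
        using ne B0 by (subst degree_mult_eq) auto
      ultimately show False using PE dAB by simp
    qed
  qed
  have aall: "a n = a 1 * real n ^ k" for n
  proof (cases "n = 0")
    case True then show ?thesis using a0 by simp
  next
    case False then show ?thesis using an[of n] by simp
  qed
  define C where "C = complex_of_real (a 1)"
  have G: "fps_complexify F = fps_const C * (fps_XD ^^ k) (inverse (1 - fps_X))"
  proof (intro fps_ext)
    fix n
    show "fps_complexify F $ n = (fps_const C * (fps_XD ^^ k) (inverse (1 - fps_X))) $ n"
      using aall[of n] by (simp add: fps_complexify_def XDk_nth C_def a_def)
  qed
  obtain N' where N': "fps_of_poly N' = (1 - fps_X)^(Suc k) * (fps_XD ^^ k) (inverse (1 - fps_X) :: complex fps)"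
    using XDk_poly by blast
  have PE: "Ac * [:1,-1:]^(Suc k) = smult C (N' * Bc)"
  proof -
    have "fps_of_poly (Ac * [:1,-1:]^(Suc k)) = fps_complexify F * fps_of_poly Bc * (1 - fps_X)^(Suc k)"
      using FBc by (simp add: fps_of_poly_mult fps_of_poly_power fps_of_poly_1m)
    also have "\<dots> = fps_const C * fps_of_poly N' * fps_of_poly Bc" using G N' by (simp add: ac_simps)
    also have "\<dots> = fps_of_poly (smult C (N' * Bc))" by (simp add: fps_of_poly_smult fps_of_poly_mult ac_simps)
    finally show ?thesis by (simp add: fps_of_poly_eq_iff)
  qed
  have Acnz: "Ac \<noteq> 0" using assms(2) by (simp add: Ac_def map_poly_eq_0_iff)
  have poles: "poles_rf A B \<subseteq> {1}"
  proof
    fix z assume "z \<in> poles_rf A B"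
    then have lt: "order z Ac < order z Bc" by (simp add: poles_rf_def Ac_def Bc_def)
    show "z \<in> {1}"
    proof (rule ccontr)
      assume "z \<notin> {1}"
      then have z1: "z \<noteq> 1" by simp
      have "[:1,-1:] \<noteq> (0::complex poly)" by simp
      then have "[:1,-1:]^(Suc k) \<noteq> (0::complex poly)" by (rule power_not_zero)
      then have LHSnz: "Ac * [:1,-1:]^(Suc k) \<noteq> 0" using Acnz by (intro no_zero_divisors)
      have o1: "order z (Ac * [:1,-1:]^(Suc k)) = order z Ac + order z ([:1,-1:]^(Suc k))"
        by (rule order_mult[OF LHSnz])
      have o2: "order z ([:1,-1:]^(Suc k)) = 0" using z1 by (intro order_0I) simp
      have Cnz: "C \<noteq> 0" using a1 C_def by simp
      have prodnz: "N' * Bc \<noteq> 0" using PE LHSnz by auto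
      have o3: "order z (smult C (N' * Bc)) = order z N' + order z Bc"
        using order_smult[OF Cnz] order_mult[OF prodnz] by simp
      have "order z Ac \<ge> order z Bc" using o1 o2 o3 PE by simp
      then show False using lt by simp
    qed
  qed
  show ?thesis using poles G lamk unfolding F_def by blast
qed

end
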